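(* Let $n$ be a positive even integer, $0\le a<b$ and $d>0$. If a set $A\subseteq\mathbb{R}^2$ is totally $n$-dissected at the interval $(a,b)$ with thickness $d$, and $a<\cot(\pi/n)$, then $A$ is not drawable.
   Context: For $X\subseteq\mathbb{R}^2$ let $N(X)=\{x: |x-y|<1 \text{ for some } y\in X\}$. Let $\mathcal{D}_1=\{N(A_1): A_1\subseteq\mathbb{R}^2\}$ and for $m\ge 2$ let $\mathcal{D}_m=\{D\cup N(A_m): D\in\mathcal{D}_{m-1}, A_m\subseteq\mathbb{R}^2\}$ if $m$ is odd and $\mathcal{D}_m=\{D\setminus N(A_m): D\in\mathcal{D}_{m-1}, A_m\subseteq\mathbb{R}^2\}$ if $m$ is even; a set is drawable if it lies in $\bigcup_m\mathcal{D}_m$. Let $\ell$ be a ray emanating from $P$, and let $P_1,P_2\in\ell$ be the points at distance $a$ and $b$ from $P$. Consider the two rectangles, one on each side of the line through $\ell$, having $P_1P_2$ as a side and other side length $d$. $A$ is dissected by $\ell$ at $(a,b)$ with thickness $d$ if the interior of one of these rectangles is contained in $A$ and the interior of the other is disjoint from $A$; the dissection is clockwise if the rectangle contained in $A$ lies on the clockwise side of $\ell$ (the side swept by rotating $\ell$ clockwise about $P$), and counterclockwise otherwise. $A$ is totally $n$-dissected at $(a,b)$ with thickness $d$ if there are rays $\ell_1,\dots,\ell_n$ emanating from a common point, in this cyclic order, dividing the plane into $n$ equal angles, such that $A$ is dissected by each $\ell_i$ at $(a,b)$ with thickness $d$ and cyclically adjacent rays have opposite orientations. *)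

theory Defs
  imports "HOL-Analysis.Analysis"
begin

text \<open>The plane R^2 is modelled by the complex numbers.\<close>

definition nbhd :: "complex set \<Rightarrow> complex set" where
  "nbhd X = {x. \<exists>y\<in>X. dist x y < 1}"

fun Dcls :: "nat \<Rightarrow> complex set set" where
  "Dcls 0 = {}"
| "Dcls (Suc 0) = {nbhd A1 | A1. True}"
| "Dcls (Suc (Suc k)) =
     (if odd (Suc (Suc k))
      then {D \<union> nbhd Am | D Am. D \<in> Dcls (Suc k)}
      else {D - nbhd Am | D Am. D \<in> Dcls (Suc k)})"

definition drawable :: "complex set \<Rightarrow> bool" where
  "drawable A \<longleftrightarrow> (\<exists>m\<ge>1. A \<in> Dcls m)"

text \<open>Open rectangle with side from P + a u to P + b u (u the unit direction of the ray),
  lying on the side of the ray given by the unit normal w (either i u or -i u).\<close>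
definition rect :: "complex \<Rightarrow> complex \<Rightarrow> complex \<Rightarrow> real \<Rightarrow> real \<Rightarrow> real \<Rightarrow> complex set" where
  "rect P u w a b d = {P + of_real s * u + of_real t * w | s t. a < s \<and> s < b \<and> 0 < t \<and> t < d}"

text \<open>Clockwise side of the ray from P in direction u: rotation by -90 degrees, i.e. -i u.\<close>
definition dissected_cw :: "complex set \<Rightarrow> complex \<Rightarrow> complex \<Rightarrow> real \<Rightarrow> real \<Rightarrow> real \<Rightarrow> bool" where
  "dissected_cw A P u a b d \<longleftrightarrow>
     rect P u (- \<i> * u) a b d \<subseteq> A \<and> rect P u (\<i> * u) a b d \<inter> A = {}"

definition dissected_ccw :: "complex set \<Rightarrow> complex \<Rightarrow> complex \<Rightarrow> real \<Rightarrow> real \<Rightarrow> real \<Rightarrow> bool" where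
  "dissected_ccw A P u a b d \<longleftrightarrow>
     rect P u (\<i> * u) a b d \<subseteq> A \<and> rect P u (- \<i> * u) a b d \<inter> A = {}"

text \<open>Totally n-dissected: rays from P in directions cis(theta + 2 pi k / n), k = 0..n-1
  (in counterclockwise cyclic order, equal angles); orientation ori k (True = clockwise)
  alternates between cyclically adjacent rays.\<close>
definition totally_dissected :: "complex set \<Rightarrow> nat \<Rightarrow> real \<Rightarrow> real \<Rightarrow> real \<Rightarrow> bool" where
  "totally_dissected A n a b d \<longleftrightarrow>
     (\<exists>P \<theta>. \<exists>ori :: nat \<Rightarrow> bool.
        (\<forall>k<n. if ori k
                then dissected_cw A P (cis (\<theta> + 2 * pi * real k / real n)) a b d
                else dissected_ccw A P (cis (\<theta> + 2 * pi * real k / real n)) a b d) \<and>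
        (\<forall>k<n. ori ((k + 1) mod n) \<noteq> ori k))"

end

theory Submission imports Defs begin

definition lay :: "(nat \<Rightarrow> complex set) \<Rightarrow> nat \<Rightarrow> complex \<Rightarrow> bool" where
 "lay As m x \<longleftrightarrow> (\<exists>j. 1 \<le> j \<and> j \<le> m \<and> odd j \<and> x \<in> nbhd (As j) \<and> (\<forall>i. j < i \<and> i \<le> m \<longrightarrow> x \<notin> nbhd (As i)))"

lemma lay_Suc:
  "lay (As(Suc m := B)) (Suc m) x \<longleftrightarrow> (x \<in> nbhd B \<and> odd (Suc m)) \<or> (x \<notin> nbhd B \<and> lay As m x)"
proof
  assume "lay (As(Suc m := B)) (Suc m) x"
  then obtain j where j: "1 \<le> j" "j \<le> Suc m" "odd j" "x \<in> nbhd ((As(Suc m := B)) j)"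
    "\<forall>i. j < i \<and> i \<le> Suc m \<longrightarrow> x \<notin> nbhd ((As(Suc m := B)) i)" unfolding lay_def by blast
  show "(x \<in> nbhd B \<and> odd (Suc m)) \<or> (x \<notin> nbhd B \<and> lay As m x)"
  proof (cases "j = Suc m")
    case True then show ?thesis using j by auto
  next
    case False
    then have "j \<le> m" using j by auto
    moreover have "x \<notin> nbhd B" using j(5) False j(2) by (metis fun_upd_same le_refl le_neq_implies_less)
    moreover have "lay As m x" unfolding lay_def
      using j \<open>j \<le> m\<close> by (intro exI[of _ j]) auto
    ultimately show ?thesis by blast
  qed
next
  assume "(x \<in> nbhd B \<and> odd (Suc m)) \<or> (x \<notin> nbhd B \<and> lay As m x)"
  then show "lay (As(Suc m := B)) (Suc m) x"
  proof
    assume "x \<in> nbhd B \<and> odd (Suc m)"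
    then show ?thesis unfolding lay_def by (intro exI[of _ "Suc m"]) auto
  next
    assume h: "x \<notin> nbhd B \<and> lay As m x"
    then obtain j where j: "1 \<le> j" "j \<le> m" "odd j" "x \<in> nbhd (As j)"
      "\<forall>i. j < i \<and> i \<le> m \<longrightarrow> x \<notin> nbhd (As i)" unfolding lay_def by blast
    show ?thesis unfolding lay_def
    proof (intro exI[of _ j] conjI allI impI)
      fix i assume "j < i \<and> i \<le> Suc m"
      then show "x \<notin> nbhd ((As(Suc m := B)) i)" using h j(5) by (cases "i = Suc m") auto
    qed (use j in auto)
  qed
qed

lemma Dcls_lay: "A \<in> Dcls (Suc k) \<Longrightarrow> \<exists>As. A = {x. lay As (Suc k) x}"
proof (induction k arbitrary: A)
  case 0
  then obtain A1 where "A = nbhd A1" by auto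
  then show ?case by (intro exI[of _ "\<lambda>_. A1"]) (auto simp: lay_def)
next
  case (Suc k)
  show ?case
  proof (cases "odd (Suc (Suc k))")
    case True
    with Suc.prems obtain D Am where D: "A = D \<union> nbhd Am" "D \<in> Dcls (Suc k)" by auto
    from Suc.IH[OF D(2)] obtain As where As: "D = {x. lay As (Suc k) x}" by blast
    have L: "\<And>x. lay (As(Suc (Suc k) := Am)) (Suc (Suc k)) x \<longleftrightarrow> x \<in> nbhd Am \<or> lay As (Suc k) x"
      using lay_Suc[of As "Suc k" Am] True by blast
    show ?thesis apply (rule exI[of _ "As(Suc (Suc k) := Am)"]) unfolding D As using L by blast
  next
    case False
    with Suc.prems obtain D Am where D: "A = D - nbhd Am" "D \<in> Dcls (Suc k)" by auto
    from Suc.IH[OF D(2)] obtain As where As: "D = {x. lay As (Suc k) x}" by blast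
    have L: "\<And>x. lay (As(Suc (Suc k) := Am)) (Suc (Suc k)) x \<longleftrightarrow> x \<notin> nbhd Am \<and> lay As (Suc k) x"
      using lay_Suc[of As "Suc k" Am] False by blast
    show ?thesis apply (rule exI[of _ "As(Suc (Suc k) := Am)"]) unfolding D As using L by blast
  qed
qed

lemma lay_top:
  assumes "1 \<le> j" "j \<le> m" "x \<in> nbhd (As j)" "\<forall>i. j < i \<and> i \<le> m \<longrightarrow> x \<notin> nbhd (As i)"
  shows "lay As m x \<longleftrightarrow> odd j"
proof
  assume "lay As m x"
  then obtain j' where j': "1 \<le> j'" "j' \<le> m" "odd j'" "x \<in> nbhd (As j')"
      "\<forall>i. j' < i \<and> i \<le> m \<longrightarrow> x \<notin> nbhd (As i)" unfolding lay_def by blast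
  have "j' = j" using j' assms by (metis linorder_neqE_nat)
  then show "odd j" using j' by simp
next
  assume "odd j" then show "lay As m x" unfolding lay_def using assms by blast
qed

lemma closure_nbhd:
  assumes "x \<in> closure (nbhd X)"
  shows "\<exists>c. ball c 1 \<subseteq> nbhd X \<and> dist x c \<le> 1"
proof -
  define S where "S = (\<Union>c\<in>closure X. \<Union>e\<in>cball (0::complex) 1. {c + e})"
  have "closed S" unfolding S_def by (intro closed_compact_sums) auto
  have "nbhd X \<subseteq> S"
  proof
    fix z assume "z \<in> nbhd X"
    then obtain y where y: "y \<in> X" "dist z y < 1" unfolding nbhd_def by auto
    have "z = y + (z - y)" by simp
    moreover have "z - y \<in> cball 0 1" using y(2) norm_minus_commute[of z y] by (simp add: dist_norm)
    moreover have "y \<in> closure X" using y(1) closure_subset by blast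
    ultimately show "z \<in> S" unfolding S_def by blast
  qed
  then have "closure (nbhd X) \<subseteq> S" using \<open>closed S\<close> closure_minimal by blast
  with assms obtain c e where ce: "c \<in> closure X" "e \<in> cball 0 1" "x = c + e" unfolding S_def by blast
  have "dist x c \<le> 1" using ce by (simp add: dist_norm)
  moreover have "ball c 1 \<subseteq> nbhd X"
  proof
    fix z assume "z \<in> ball c 1"
    then have "0 < 1 - dist z c" by (simp add: dist_commute)
    with ce(1) obtain y where "y \<in> X" "dist y c < 1 - dist z c" using closure_approachable by blast
    then have "dist z y < 1" using dist_triangle[of z y c] by (simp add: dist_commute)
    then show "z \<in> nbhd X" unfolding nbhd_def using \<open>y \<in> X\<close> by blast
  qed
  ultimately show ?thesis by blast
qed

lemma closure_finite_UN:
  assumes "finite I" "\<And>e. e > 0 \<Longrightarrow> \<exists>y. dist y z < e \<and> (\<exists>i\<in>I. y \<in> N i)"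
  shows "\<exists>i\<in>I. z \<in> closure (N i)"
proof -
  have "z \<in> closure (\<Union>i\<in>I. N i)" using assms(2) unfolding closure_approachable by blast
  moreover have "closure (\<Union>i\<in>I. N i) \<subseteq> (\<Union>i\<in>I. closure (N i))"
    by (intro closure_minimal closed_UN) (use assms(1) closure_subset in auto)
  ultimately show ?thesis by blast
qed

lemma cis_period: "cis (t + 2 * pi * real q) = cis t"
proof -
  have "cis (2 * pi * real q) = 1"
    using cos_int_2pin[of "int q"] sin_int_2pin[of "int q"] by (simp add: cis.ctr complex_eq_iff)
  then show ?thesis by (metis cis_mult mult_1_right)
qed


lemma tangent:
  fixes P u c :: complex and \<sigma> a b d s :: real
  assumes u: "norm u = 1" and sig: "\<sigma> = 1 \<or> \<sigma> = -1" and "a < s" "s < b" "d > 0" "open U"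
    and xU: "P + of_real s * u \<in> U" and xc: "dist (P + of_real s * u) c \<le> 1"
    and avoid: "\<forall>y\<in>U. dist y c < 1 \<longrightarrow> y \<notin> rect P u (of_real \<sigma> * \<i> * u) a b d"
  shows "c = P + of_real s * u - of_real \<sigma> * \<i> * u"
proof (rule ccontr)
  assume ne: "c \<noteq> P + of_real s * u - of_real \<sigma> * \<i> * u"
  define x where "x = P + of_real s * u"
  have u0: "u \<noteq> 0" using u by auto
  define \<zeta> where "\<zeta> = (c - x) / u"
  have c_eq: "c = x + \<zeta> * u" using u0 unfolding \<zeta>_def by simp
  have s2: "\<sigma> * \<sigma> = 1" using sig by auto
  define p where "p = Re \<zeta>"
  define q where "q = \<sigma> * Im \<zeta>"
  have imz: "Im \<zeta> = \<sigma> * q" unfolding q_def using s2 by (simp add: mult.assoc[symmetric])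
  have nz: "norm \<zeta> \<le> 1" using xc u unfolding \<zeta>_def x_def by (simp add: norm_divide dist_norm norm_minus_commute)
  have pq: "p^2 + q^2 \<le> 1"
  proof -
    have "p^2 + q^2 = (cmod \<zeta>)^2" unfolding p_def q_def using s2 cmod_power2[of \<zeta>]
      by (simp add: power2_eq_square algebra_simps)
    also have "\<dots> \<le> 1" using nz by (simp add: power_le_one)
    finally show ?thesis .
  qed
  have "q^2 \<le> 1" using pq zero_le_power2[of p] by linarith
  then have qa: "\<bar>q\<bar> \<le> 1" by (simp add: abs_square_le_1)
  have "p^2 \<le> 1" using pq zero_le_power2[of q] by linarith
  then have pa: "\<bar>p\<bar> \<le> 1" by (simp add: abs_square_le_1)
  have qne: "q \<noteq> -1"
  proof
    assume q1: "q = -1"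
    then have "p^2 \<le> 0" using pq by simp
    then have "p = 0" by simp
    then have "\<zeta> = - of_real \<sigma> * \<i>" using imz q1 p_def by (simp add: complex_eq_iff)
    then show False using ne c_eq x_def by (simp add: algebra_simps)
  qed
  with qa have qg: "q > -1" by linarith
  obtain r where r: "r > 0" "ball x r \<subseteq> U" using \<open>open U\<close> xU x_def open_contains_ball by blast
  define e where "e = min (1/2) (min (r/4) (min ((s-a)/2) (min ((b-s)/2) (d/3))))"
  have e0: "0 < e" unfolding e_def using r \<open>a < s\<close> \<open>s < b\<close> \<open>d > 0\<close> by simp
  have e: "0 < e" "e \<le> 1/2" "e \<le> r/4" "e \<le> (s-a)/2" "e \<le> (b-s)/2" "e \<le> d/3"
    unfolding e_def using e0[unfolded e_def]
    by (intro min.coboundedI2 min.cobounded1 min.cobounded2 | assumption)+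
  define v where "v = Complex p (\<sigma> * (1 + q))"
  define y where "y = x + of_real e * u * v"
  have nv: "norm v \<le> 3"
  proof -
    have "norm v \<le> \<bar>Re v\<bar> + \<bar>Im v\<bar>" by (rule cmod_le)
    also have "\<bar>Im v\<bar> = 1 + q" unfolding v_def using sig qg by (auto simp: abs_mult)
    finally show ?thesis unfolding v_def using pa qa by simp
  qed
  have "dist y x = e * norm v" unfolding y_def dist_norm using u e by (simp add: norm_mult)
  also have "\<dots> \<le> e * 3" using nv e by (intro mult_left_mono) auto
  also have "\<dots> < r" using e r by linarith
  finally have yU: "y \<in> U" using r by (auto simp: dist_commute)
  have yc_eq: "y - c = u * (of_real e * v - \<zeta>)" unfolding y_def c_eq by (simp add: algebra_simps)
  have "dist y c = norm (of_real e * v - \<zeta>)" 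
    unfolding dist_norm yc_eq norm_mult u by simp
  also have "\<dots> < 1"
  proof -
    let ?w = "of_real e * v - \<zeta>"
    have "(cmod ?w)^2 = (e*p - p)^2 + (e * (\<sigma> * (1+q)) - \<sigma> * q)^2"
      using imz by (simp add: cmod_power2 v_def p_def)
    also have "\<dots> = (1-e)^2 * p^2 + (\<sigma>*\<sigma>) * (e*(1+q) - q)^2"
      by (simp add: power2_eq_square algebra_simps)
    also have "\<dots> = (1-e)^2 * p^2 + (e*(1+q) - q)^2"
      using s2 by simp
    also have "\<dots> \<le> (1-e)^2 * (1 - q^2) + (e*(1+q) - q)^2"
      using pq by (intro add_right_mono mult_left_mono) auto
    also have "\<dots> = 1 - 2*e*(1+q)*(1-e)" by (simp add: power2_eq_square algebra_simps)
    also have "\<dots> < 1" using e qg by (simp add: mult_pos_pos)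
    finally have "(cmod ?w)^2 < 1" .
    then show ?thesis by (simp add: abs_square_less_1)
  qed
  finally have yc: "dist y c < 1" .
  have ep: "\<bar>e*p\<bar> \<le> e" using pa e by (simp add: abs_mult mult_left_le)
  have e2: "e*2 \<le> s - a" "e*2 \<le> b - s" "e*3 \<le> d" using e by simp_all
  have ep2: "-e \<le> e*p" "e*p \<le> e" using ep by (auto simp: abs_le_iff)
  have eq: "e*(1+q) \<le> e*2" using qa e by (intro mult_left_mono) auto
  have "y \<in> rect P u (of_real \<sigma> * \<i> * u) a b d"
    unfolding rect_def
  proof (intro CollectI exI conjI)
    show "y = P + of_real (s + e * p) * u + of_real (e * (1+q)) * (of_real \<sigma> * \<i> * u)"
      unfolding y_def x_def v_def by (simp add: complex_eq_iff algebra_simps)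
    show "a < s + e*p" using e2 ep2 \<open>a < s\<close> by linarith
    show "s + e*p < b" using e2 ep2 \<open>s < b\<close> by linarith
    show "0 < e * (1+q)" using e qg by simp
    show "e * (1+q) < d" using e2 e eq \<open>d > 0\<close> by linarith
  qed
  then show False using avoid yU yc by blast
qed


lemma aux_sq:
  fixes sa ca t :: real
  assumes "sa^2 + ca^2 = 1"
  shows "(t*ca - t)^2 + (t* sa - 1)^2 = 1 + 2*t*(t*(1-ca) - sa)"
proof -
  have "(t*ca - t)^2 + (t* sa - 1)^2 = t^2 * (sa^2 + ca^2) + t^2 - 2*t^2*ca - 2*t* sa + 1"
    by (simp add: power2_eq_square algebra_simps)
  also have "\<dots> = 1 + 2*t*(t*(1-ca) - sa)" unfolding assms by (simp add: power2_eq_square algebra_simps)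
  finally show ?thesis .
qed

lemma neighbor:
  fixes \<tau> s \<alpha> :: real
  assumes tau: "\<tau> = 1 \<or> \<tau> = -1" and "0 < s" and key: "s * (1 - cos \<alpha>) < sin \<alpha>"
  shows "norm (of_real s * cis (\<tau> * \<alpha>) - of_real s - of_real \<tau> * \<i>) < 1"
proof -
  let ?w = "of_real s * cis (\<tau> * \<alpha>) - of_real s - of_real \<tau> * \<i>"
  have sc: "(sin \<alpha>)^2 + (cos \<alpha>)^2 = 1" by (rule sin_cos_squared_add)
  have re: "Re ?w = s * cos \<alpha> - s" using tau by auto
  have im: "Im ?w = \<tau> * (s * sin \<alpha> - 1)" using tau by auto
  have t2: "\<tau> * \<tau> = 1" using tau by auto
  have "(cmod ?w)^2 = (s * cos \<alpha> - s)^2 + (\<tau> * \<tau>) * (s * sin \<alpha> - 1)^2"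
    unfolding cmod_power2 re im by (simp add: power2_eq_square algebra_simps)
  also have "\<dots> = (s * cos \<alpha> - s)^2 + (s * sin \<alpha> - 1)^2" using t2 by simp
  also have "\<dots> = 1 + 2 * s * (s * (1 - cos \<alpha>) - sin \<alpha>)"
    using sc by (rule aux_sq)
  also have "\<dots> < 1"
  proof -
    have "2 * s * (s * (1 - cos \<alpha>) - sin \<alpha>) < 0" using \<open>0 < s\<close> key by (intro mult_pos_neg) auto
    then show ?thesis by simp
  qed
  finally show ?thesis by (simp add: abs_square_less_1)
qed

lemma cis_mod:
  assumes "n > 0"
  shows "cis (\<theta> + 2 * pi * real (r mod n) / real n) = cis (\<theta> + 2 * pi * real r / real n)"
proof -
  have "real r = real (r div n) * real n + real (r mod n)"
    by (metis of_nat_add of_nat_mult div_mult_mod_eq)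
  then have eq: "\<theta> + 2 * pi * real r / real n = (\<theta> + 2 * pi * real (r mod n) / real n) + 2 * pi * real (r div n)"
    using assms by (simp add: field_simps)
  show ?thesis unfolding eq
    by (rule cis_period[symmetric])
qed

lemma near_pts:
  assumes u: "norm u = 1" and "a < s" "s < b" "d > 0" "open V" "P + of_real s * u \<in> V" "e > 0"
    and H: "(rect P u (\<i>*u) a b d \<subseteq> A \<and> rect P u (-\<i>*u) a b d \<inter> A = {}) \<or>
            (rect P u (-\<i>*u) a b d \<subseteq> A \<and> rect P u (\<i>*u) a b d \<inter> A = {})"
  shows "\<exists>y1 y2. y1 \<in> V \<and> y2 \<in> V \<and> dist y1 (P + of_real s * u) < e \<and> dist y2 (P + of_real s * u) < e \<and> y1 \<in> A \<and> y2 \<notin> A"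
proof -
  let ?x = "P + of_real s * u"
  obtain r where r: "r > 0" "ball ?x r \<subseteq> V" using assms(5,6) open_contains_ball by blast
  define \<delta> where "\<delta> = min (d/2) (min (e/2) (r/2))"
  have \<delta>: "0 < \<delta>" "\<delta> < d" "\<delta> < e" "\<delta> < r" unfolding \<delta>_def using r \<open>d > 0\<close> \<open>e > 0\<close> by auto
  define yp where "yp = ?x + of_real \<delta> * (\<i> * u)"
  define ym where "ym = ?x + of_real \<delta> * (-\<i> * u)"
  have yp: "yp \<in> rect P u (\<i>*u) a b d" unfolding rect_def yp_def
    by (rule CollectI, rule exI[of _ s], rule exI[of _ \<delta>]) (use \<delta> assms(2,3) in auto)
  have ym: "ym \<in> rect P u (-\<i>*u) a b d" unfolding rect_def ym_def
    by (rule CollectI, rule exI[of _ s], rule exI[of _ \<delta>]) (use \<delta> assms(2,3) in auto)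
  have dp: "dist yp ?x = \<delta>" unfolding yp_def dist_norm using u \<delta> by (simp add: norm_mult)
  have dm: "dist ym ?x = \<delta>" unfolding ym_def dist_norm using u \<delta> by (simp add: norm_mult)
  have "yp \<in> V" "ym \<in> V" using dp dm \<delta> r by (auto simp: dist_commute)
  then show ?thesis
  proof (cases "rect P u (\<i>*u) a b d \<subseteq> A \<and> rect P u (-\<i>*u) a b d \<inter> A = {}")
    case True
    then have "yp \<in> A" "ym \<notin> A" using yp ym by auto
    then show ?thesis using \<open>yp \<in> V\<close> \<open>ym \<in> V\<close> dp dm \<delta> by metis
  next
    case False
    then have "ym \<in> A" "yp \<notin> A" using H yp ym by auto
    then show ?thesis using \<open>yp \<in> V\<close> \<open>ym \<in> V\<close> dp dm \<delta> by metis
  qed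
qed


theorem theorem4p6:
  fixes A :: "complex set" and n :: nat and a b d :: real
  assumes "n > 0" and "even n"
    and "0 \<le> a" and "a < b" and "d > 0"
    and "totally_dissected A n a b d"
    and "a < cot (pi / real n)"
  shows "\<not> drawable A"
proof
  assume "drawable A"
  then obtain m where m: "m \<ge> 1" "A \<in> Dcls m" unfolding drawable_def by blast
  then obtain k0 where "m = Suc k0" by (cases m) auto
  with m Dcls_lay obtain As where AsA: "A = {x. lay As m x}" by blast
  from assms(6) obtain P \<theta> and ori :: "nat \<Rightarrow> bool" where
    Hd: "\<forall>k<n. if ori k
                then dissected_cw A P (cis (\<theta> + 2 * pi * real k / real n)) a b d
                else dissected_ccw A P (cis (\<theta> + 2 * pi * real k / real n)) a b d"
    unfolding totally_dissected_def by blast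
  define u where "u k = cis (\<theta> + 2 * pi * real k / real n)" for k
  have nu: "norm (u k) = 1" for k unfolding u_def by simp
  have H: "(rect P (u k) (\<i>*u k) a b d \<subseteq> A \<and> rect P (u k) (-\<i>*u k) a b d \<inter> A = {}) \<or>
            (rect P (u k) (-\<i>*u k) a b d \<subseteq> A \<and> rect P (u k) (\<i>*u k) a b d \<inter> A = {})" if "k < n" for k
  proof -
    have h: "if ori k then dissected_cw A P (u k) a b d else dissected_ccw A P (u k) a b d"
      using Hd that unfolding u_def by blast
    show ?thesis
    proof (cases "ori k")
      case True
      then have "dissected_cw A P (u k) a b d" using h by simp
      then show ?thesis unfolding dissected_cw_def by blast
    next
      case False
      then have "dissected_ccw A P (u k) a b d" using h by simp
      then show ?thesis unfolding dissected_ccw_def by blast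
    qed
  qed
  have n2: "n \<ge> 2" using assms(1,2) by presburger
  define \<beta> where "\<beta> = pi / real n"
  have \<beta>: "0 < \<beta>" "\<beta> < pi" unfolding \<beta>_def using n2 by (auto simp: field_simps)
  have sb: "sin \<beta> > 0" using \<beta> sin_gt_zero by blast
  define c0 where "c0 = min b (cot \<beta>)"
  have ac0: "a < c0" unfolding c0_def using assms(4,7) \<beta>_def by simp
  define s where "s = (a + c0) / 2"
  have s: "a < s" "s < b" "s < cot \<beta>" "0 < s" using ac0 assms(3) unfolding s_def c0_def by auto
  have key: "s * (1 - cos (2 * \<beta>)) < sin (2 * \<beta>)"
  proof -
    have "s * sin \<beta> < cos \<beta>" using s(3) sb unfolding cot_def by (simp add: field_simps)
    then have "2 * sin \<beta> * (s * sin \<beta>) < 2 * sin \<beta> * cos \<beta>" using sb by simp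
    then show ?thesis unfolding cos_double_sin sin_double by (simp add: power2_eq_square algebra_simps)
  qed
  define x where "x k = P + of_real s * u k" for k
  define Js where "Js k = {i. 1 \<le> i \<and> i \<le> m \<and> x k \<in> closure (nbhd (As i))}" for k
  define J where "J k = Max (Js k)" for k
  have finJs: "finite (Js k)" for k unfolding Js_def by (rule finite_subset[of _ "{1..m}"]) auto
  have Jne: "Js k \<noteq> {}" if "k < n" for k
  proof -
    have "\<exists>i\<in>{1..m}. x k \<in> closure (nbhd (As i))"
    proof (rule closure_finite_UN)
      fix e :: real assume "e > 0"
      from near_pts[OF nu s(1,2) assms(5) open_UNIV _ this H[OF that]]
      obtain y where y: "dist y (x k) < e" "y \<in> A" unfolding x_def by blast
      then obtain i where "1 \<le> i" "i \<le> m" "y \<in> nbhd (As i)" unfolding AsA lay_def by blast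
      then have "i \<in> {1..m}" "y \<in> nbhd (As i)" by auto
      then show "\<exists>y. dist y (x k) < e \<and> (\<exists>i\<in>{1..m}. y \<in> nbhd (As i))" using y by blast
    qed auto
    then show ?thesis unfolding Js_def by auto
  qed
  have step: "\<exists>k'<n. J k < J k'" if "k < n" for k
  proof -
    define j where "j = J k"
    have jJ: "j \<in> Js k" unfolding j_def J_def using Max_in[OF finJs Jne[OF that]] .
    then have j: "1 \<le> j" "j \<le> m" "x k \<in> closure (nbhd (As j))" unfolding Js_def by auto
    have jmax: "x k \<notin> closure (nbhd (As i))" if "j < i" "i \<le> m" for i
    proof
      assume "x k \<in> closure (nbhd (As i))"
      then have "i \<in> Js k" unfolding Js_def using that j by auto
      then have "i \<le> j" unfolding j_def J_def using Max_ge[OF finJs] by blast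
      then show False using that by simp
    qed
    define U where "U = - (\<Union>i\<in>{j<..m}. closure (nbhd (As i)))"
    have oU: "open U" unfolding U_def by (intro open_Compl closed_UN) auto
    have xU: "x k \<in> U" unfolding U_def using jmax by auto
    obtain c where c: "ball c 1 \<subseteq> nbhd (As j)" "dist (x k) c \<le> 1" using closure_nbhd[OF j(3)] by blast
    have par: "y \<in> A \<longleftrightarrow> odd j" if "y \<in> U" "dist y c < 1" for y
    proof -
      have "y \<in> nbhd (As j)" using c that by (auto simp: dist_commute)
      moreover have "\<forall>i. j < i \<and> i \<le> m \<longrightarrow> y \<notin> nbhd (As i)"
        using that(1) closure_subset unfolding U_def by fastforce
      ultimately show ?thesis unfolding AsA using lay_top[OF j(1,2)] by blast
    qed
    have avoid: "(\<forall>y\<in>U. dist y c < 1 \<longrightarrow> y \<notin> rect P (u k) (of_real 1 * \<i> * u k) a b d) \<or>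
                 (\<forall>y\<in>U. dist y c < 1 \<longrightarrow> y \<notin> rect P (u k) (of_real (-1) * \<i> * u k) a b d)"
      using H[OF that] par by auto
    obtain \<tau> :: real where tau: "\<tau> = 1 \<or> \<tau> = -1" and ceq: "c = x k + of_real \<tau> * \<i> * u k"
    proof -
      from avoid show ?thesis
      proof
        assume av: "\<forall>y\<in>U. dist y c < 1 \<longrightarrow> y \<notin> rect P (u k) (of_real 1 * \<i> * u k) a b d"
        have "c = x k - of_real 1 * \<i> * u k"
          unfolding x_def by (rule tangent[OF nu _ s(1,2) assms(5) oU xU[unfolded x_def] c(2)[unfolded x_def] av]) simp
        then show ?thesis using that[of "-1"] by simp
      next
        assume av: "\<forall>y\<in>U. dist y c < 1 \<longrightarrow> y \<notin> rect P (u k) (of_real (-1) * \<i> * u k) a b d"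
        have "c = x k - of_real (-1) * \<i> * u k"
          unfolding x_def by (rule tangent[OF nu _ s(1,2) assms(5) oU xU[unfolded x_def] c(2)[unfolded x_def] av]) simp
        then show ?thesis using that[of "1"] by simp
      qed
    qed
    define k' where "k' = (if \<tau> = 1 then (k + 1) mod n else (k + (n - 1)) mod n)"
    have k'n: "k' < n" unfolding k'_def using assms(1) by auto
    have uk': "u k' = u k * cis (\<tau> * (2 * \<beta>))"
    proof (cases "\<tau> = 1")
      case True
      have "u k' = cis (\<theta> + 2 * pi * real (k + 1) / real n)"
        unfolding u_def k'_def using True cis_mod[OF assms(1)] by simp
      also have arg: "\<theta> + 2 * pi * real (k + 1) / real n = (\<theta> + 2 * pi * real k / real n) + \<tau> * (2 * \<beta>)"
        unfolding \<beta>_def using True assms(1) by (simp add: field_simps)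
      finally show ?thesis unfolding u_def cis_mult .
    next
      case False
      then have t: "\<tau> = -1" using tau by simp
      have "u k' = cis (\<theta> + 2 * pi * real (k + (n - 1)) / real n)"
        unfolding u_def k'_def using False cis_mod[OF assms(1)] by simp
      also have "\<theta> + 2 * pi * real (k + (n - 1)) / real n = (\<theta> + 2 * pi * real k / real n + \<tau> * (2 * \<beta>)) + 2 * pi * real (1::nat)"
        unfolding \<beta>_def t using assms(1) by (simp add: field_simps of_nat_diff)
      also have "cis (\<theta> + 2 * pi * real k / real n + \<tau> * (2 * \<beta>) + 2 * pi * real (1::nat)) = u k * cis (\<tau> * (2 * \<beta>))"
        unfolding cis_period u_def cis_mult by simp
      finally show ?thesis .
    qed
    have zc: "dist (x k') c < 1"
    proof -
      have "x k' - c = u k * (of_real s * cis (\<tau> * (2 * \<beta>)) - of_real s - of_real \<tau> * \<i>)"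
        unfolding x_def ceq uk' by (simp add: algebra_simps)
      then have "dist (x k') c = norm (of_real s * cis (\<tau> * (2 * \<beta>)) - of_real s - of_real \<tau> * \<i>)"
        by (simp add: dist_norm norm_mult nu)
      also have "\<dots> < 1" by (rule neighbor[OF tau s(4) key])
      finally show ?thesis .
    qed
    have "\<exists>i\<in>{j<..m}. x k' \<in> closure (nbhd (As i))"
    proof (rule closure_finite_UN)
      fix e :: real assume "e > 0"
      have "x k' \<in> ball c 1" using zc by (simp add: dist_commute)
      from near_pts[OF nu s(1,2) assms(5) open_ball this[unfolded x_def] \<open>e > 0\<close> H[OF k'n]]
      obtain y1 y2 where y: "y1 \<in> ball c 1" "y2 \<in> ball c 1" "dist y1 (x k') < e" "dist y2 (x k') < e"
        "y1 \<in> A" "y2 \<notin> A" unfolding x_def by blast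
      have "y1 \<in> nbhd (As j)" "y2 \<in> nbhd (As j)" using y c by auto
      have "\<exists>i. j < i \<and> i \<le> m \<and> (y1 \<in> nbhd (As i) \<or> y2 \<in> nbhd (As i))"
      proof (rule ccontr)
        assume "\<not> ?thesis"
        then have "lay As m y1 \<longleftrightarrow> odd j" "lay As m y2 \<longleftrightarrow> odd j"
          using lay_top[OF j(1,2)] \<open>y1 \<in> nbhd (As j)\<close> \<open>y2 \<in> nbhd (As j)\<close> by blast+
        then show False using y(5,6) unfolding AsA by auto
      qed
      then obtain i where i: "i \<in> {j<..m}" "y1 \<in> nbhd (As i) \<or> y2 \<in> nbhd (As i)" by auto
      then show "\<exists>y. dist y (x k') < e \<and> (\<exists>i\<in>{j<..m}. y \<in> nbhd (As i))" using y(3,4) by blast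
    qed auto
    then obtain i where i: "j < i" "i \<le> m" "x k' \<in> closure (nbhd (As i))" by auto
    then have "i \<in> Js k'" unfolding Js_def using j by auto
    then have "i \<le> J k'" unfolding J_def using Max_ge[OF finJs] by blast
    then show ?thesis using k'n i(1) unfolding j_def by (intro exI[of _ k']) auto
  qed
  define M where "M = Max (J ` {..<n})"
  have "M \<in> J ` {..<n}" unfolding M_def using assms(1) by (intro Max_in) auto
  then obtain k where k: "k < n" "J k = M" by auto
  from step[OF k(1)] obtain k' where "k' < n" "J k < J k'" by blast
  moreover have "J k' \<le> M" unfolding M_def using \<open>k' < n\<close> by (intro Max_ge) auto
  ultimately show False using k by simp
qed

end
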